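(* Let $W:[0,1]^2\to[0,1]$ be measurable ($[0,1]$ with Lebesgue measure $\lambda$). Then the following are equivalent: (i) for every finite $n$, $P(n,W)$ is almost surely a poset; (ii) $P(\infty,W)$ is almost surely a poset; (iii) there exist a strict partial order $\prec$ on $[0,1]$ making $([0,1],\mathcal B,\lambda,\prec)$ an ordered probability space and a kernel $W'$ on it such that $W=W'$ a.e.; (iv) $t(\mathsf D_1,W)=t(\mathsf D_2,W)$ and $t(\mathsf D_3,W)=0$.
   Context: For $n\in\mathbb N\cup\{\infty\}$, $[n]=\{1,\dots,n\}$ ($[\infty]=\mathbb N$). For measurable $W:[0,1]^2\to[0,1]$, $P(n,W)$ is the random digraph on $[n]$ obtained by taking i.i.d. uniform $X_i\in[0,1]$ and independent i.i.d. $\xi_{ij}\sim U(0,1)$, $i,j\in\mathbb N$, and putting an edge $i\to j$ iff $\xi_{ij}<W(X_i,X_j)$; it is a poset if this relation is a strict partial order. For a finite digraph $F$ on $\{1,\dots,k\}$, $t(F,W)=\int_{[0,1]^k}\prod_{(i,j)\in E(F)}W(x_i,x_j)\,dx_1\cdots dx_k$. $\mathsf D_1,\mathsf D_2,\mathsf D_3$ are the digraphs on $\{1,2,3\}$ with edge sets $\{12,23\}$, $\{12,23,13\}$, $\{12,23,31\}$ respectively. An ordered probability space $(\mathcal S,\mathcal F,\mu,\prec)$ is a probability space with a strict partial order $\prec$ such that $\{(x,y):x\prec y\}\in\mathcal F\times\mathcal F$ ($\mathcal B$ = Borel $\sigma$-field); a kernel on it is a measurable $W':\mathcal S^2\to[0,1]$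 such that for all $x,y,z$: $W'(x,y)>0\Rightarrow x\prec y$, and ($W'(x,y)>0$, $W'(y,z)>0$) $\Rightarrow W'(x,z)=1$. *)

theory Defs
  imports "HOL-Probability.Probability"
begin

definition unitI :: "real measure" where
  "unitI = restrict_space lborel {0..1}"

text \<open>Sample space of the construction of P(n,W): independent uniform variables
  X_i (indexed by Inl i) and xi_ij (indexed by Inr (i,j)).\<close>
definition sample_space :: "(nat + nat \<times> nat \<Rightarrow> real) measure" where
  "sample_space = PiM UNIV (\<lambda>_. unitI)"

definition rand_edge :: "(real \<Rightarrow> real \<Rightarrow> real) \<Rightarrow> (nat + nat \<times> nat \<Rightarrow> real) \<Rightarrow> nat \<Rightarrow> nat \<Rightarrow> bool" where
  "rand_edge W \<omega> i j \<longleftrightarrow> i \<noteq> j \<and> \<omega> (Inr (i, j)) < W (\<omega> (Inl i)) (\<omega> (Inl j))"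

definition strict_po_on :: "'a set \<Rightarrow> ('a \<Rightarrow> 'a \<Rightarrow> bool) \<Rightarrow> bool" where
  "strict_po_on S R \<longleftrightarrow> (\<forall>x\<in>S. \<not> R x x) \<and>
     (\<forall>x\<in>S. \<forall>y\<in>S. \<forall>z\<in>S. R x y \<and> R y z \<longrightarrow> R x z)"

definition rand_is_poset :: "(real \<Rightarrow> real \<Rightarrow> real) \<Rightarrow> nat set \<Rightarrow> (nat + nat \<times> nat \<Rightarrow> real) \<Rightarrow> bool" where
  "rand_is_poset W V \<omega> \<longleftrightarrow> strict_po_on V (rand_edge W \<omega>)"

text \<open>Homomorphism density t(F,W) for a digraph F on {1..k} with edge set E.\<close>
definition hom_density :: "nat \<Rightarrow> (nat \<times> nat) set \<Rightarrow> (real \<Rightarrow> real \<Rightarrow> real) \<Rightarrow> real" where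
  "hom_density k E W = integral\<^sup>L (PiM {1..k} (\<lambda>_. unitI)) (\<lambda>x. \<Prod>(i,j)\<in>E. W (x i) (x j))"

definition D1 :: "(nat \<times> nat) set" where "D1 = {(1,2),(2,3)}"
definition D2 :: "(nat \<times> nat) set" where "D2 = {(1,2),(2,3),(1,3)}"
definition D3 :: "(nat \<times> nat) set" where "D3 = {(1,2),(2,3),(3,1)}"

definition ordered_unitI :: "(real \<Rightarrow> real \<Rightarrow> bool) \<Rightarrow> bool" where
  "ordered_unitI prec \<longleftrightarrow> strict_po_on {0..1} prec \<and>
     {(x,y) \<in> {0..1} \<times> {0..1}. prec x y} \<in> sets (unitI \<Otimes>\<^sub>M unitI)"

definition is_kernel :: "(real \<Rightarrow> real \<Rightarrow> bool) \<Rightarrow> (real \<Rightarrow> real \<Rightarrow> real) \<Rightarrow> bool" where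
  "is_kernel prec W' \<longleftrightarrow>
     (\<lambda>(x,y). W' x y) \<in> borel_measurable (unitI \<Otimes>\<^sub>M unitI) \<and>
     (\<forall>x\<in>{0..1}. \<forall>y\<in>{0..1}. 0 \<le> W' x y \<and> W' x y \<le> 1) \<and>
     (\<forall>x\<in>{0..1}. \<forall>y\<in>{0..1}. W' x y > 0 \<longrightarrow> prec x y) \<and>
     (\<forall>x\<in>{0..1}. \<forall>y\<in>{0..1}. \<forall>z\<in>{0..1}. W' x y > 0 \<and> W' y z > 0 \<longrightarrow> W' x z = 1)"

end

theory Submission
  imports Defs
begin


lemma emeasure_lborel_cball_real: "0 \<le> r \<Longrightarrow> emeasure lborel (cball (x::real) r) = ennreal (2*r)"
  by (simp add: cball_eq_atLeastAtMost)

lemma neg_bad: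
  fixes A S :: "real set" and \<delta> :: real
  assumes A: "A \<in> sets borel" and d: "\<delta> > 0" and SA: "S \<subseteq> A"
    and H: "\<And>x d. x \<in> S \<Longrightarrow> d > 0 \<Longrightarrow> \<exists>r. 0 < r \<and> r < d \<and> ennreal (\<delta> * (2*r)) < emeasure lborel (cball x r - A)"
  shows "negligible S"
proof (subst negligible_outer_le, intro allI impI)
  fix e :: real assume e: "e > 0"
  have Al: "A \<in> sets lebesgue" using A by (simp add: sets_completionI_sets)
  obtain G where G: "open G" "A \<subseteq> G" "emeasure lebesgue (G - A) < ennreal (\<delta> * e)"
    using sets_lebesgue_outer_open[OF Al, of "\<delta>*e"] d e by (metis mult_pos_pos)
  have GAb: "G - A \<in> sets borel" using G(1) A by auto
  have GA: "emeasure lborel (G - A) < ennreal (\<delta> * e)"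
    using G(3) GAb by (simp add: emeasure_completion main_part_sets)
  define K where "K = {(x,r). x \<in> S \<and> 0 < r \<and> cball x r \<subseteq> G \<and>
       ennreal (\<delta> * (2*r)) < emeasure lborel (cball x r - A)}"
  have Kr: "\<And>i. i \<in> K \<Longrightarrow> 0 < snd i" by (auto simp: K_def)
  have Kcov: "\<exists>i. i \<in> K \<and> x \<in> cball (fst i) (snd i) \<and> snd i < d" if xS: "x \<in> S" and dpos: "0 < d" for x d
  proof -
    have xG: "x \<in> G" using SA G(2) xS by blast
    obtain \<rho> where \<rho>: "\<rho> > 0" "ball x \<rho> \<subseteq> G" using G(1) xG open_contains_ball_eq by blast
    obtain r where r: "0 < r" "r < min d \<rho>" "ennreal (\<delta> * (2*r)) < emeasure lborel (cball x r - A)"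
      using H[OF xS, of "min d \<rho>"] \<rho> dpos by auto
    have "cball x r \<subseteq> ball x \<rho>" using r by (auto simp: subset_iff)
    then have "cball x r \<subseteq> G" using \<rho>(2) by blast
    then show ?thesis using r xS by (intro exI[of _ "(x,r)"]) (auto simp: K_def)
  qed
  obtain C where C: "countable C" "C \<subseteq> K"
     "pairwise (\<lambda>i j. disjnt (cball (fst i) (snd i)) (cball (fst j) (snd j))) C"
     "negligible(S - (\<Union>i \<in> C. cball (fst i) (snd i)))"
    using Vitali_covering_theorem_cballs[of K snd S fst] Kr Kcov by blast
  define U where "U = (\<Union>i \<in> C. cball (fst i) (snd i))"
  have Ub: "U \<in> sets borel" unfolding U_def using C(1) by (intro sets.countable_UN'') auto
  have disj: "disjoint_family_on (\<lambda>i. cball (fst i) (snd i)) C"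
    using C(3) unfolding disjoint_family_on_def pairwise_def disjnt_def by auto
  have disj2: "disjoint_family_on (\<lambda>i. cball (fst i) (snd i) - A) C"
    using disj unfolding disjoint_family_on_def by blast
  have eU: "emeasure lborel U = (\<integral>\<^sup>+ i. emeasure lborel (cball (fst i) (snd i)) \<partial>count_space C)"
    unfolding U_def by (rule emeasure_UN_countable) (use C(1) disj in auto)
  have eUA: "emeasure lborel (U - A) = (\<integral>\<^sup>+ i. emeasure lborel (cball (fst i) (snd i) - A) \<partial>count_space C)"
  proof -
    have "U - A = (\<Union>i \<in> C. cball (fst i) (snd i) - A)" unfolding U_def by auto
    have "emeasure lborel (\<Union>i \<in> C. cball (fst i) (snd i) - A) = (\<integral>\<^sup>+ i. emeasure lborel (cball (fst i) (snd i) - A) \<partial>count_space C)"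
      by (rule emeasure_UN_countable) (use C(1) disj2 A in auto)
    then show ?thesis using \<open>U - A = _\<close> by simp
  qed
  have "ennreal \<delta> * emeasure lborel U = (\<integral>\<^sup>+ i. ennreal \<delta> * emeasure lborel (cball (fst i) (snd i)) \<partial>count_space C)"
    unfolding eU by (simp add: nn_integral_cmult)
  also have "\<dots> \<le> (\<integral>\<^sup>+ i. emeasure lborel (cball (fst i) (snd i) - A) \<partial>count_space C)"
  proof (rule nn_integral_mono)
    fix i assume "i \<in> space (count_space C)"
    then have iK: "i \<in> K" using C(2) by auto
    then have "0 < snd i" by (rule Kr)
    then have "ennreal \<delta> * emeasure lborel (cball (fst i) (snd i)) = ennreal (\<delta> * (2 * snd i))"
      using d by (simp add: emeasure_lborel_cball_real ennreal_mult)
    also have "\<dots> \<le> emeasure lborel (cball (fst i) (snd i) - A)"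
      using iK by (auto simp: K_def)
    finally show "ennreal \<delta> * emeasure lborel (cball (fst i) (snd i)) \<le> emeasure lborel (cball (fst i) (snd i) - A)" .
  qed
  also have "\<dots> = emeasure lborel (U - A)" by (rule eUA[symmetric])
  also have "\<dots> \<le> emeasure lborel (G - A)"
  proof (rule emeasure_mono)
    show "U - A \<subseteq> G - A"
    proof
      fix y assume "y \<in> U - A"
      then obtain i where i: "i \<in> C" "y \<in> cball (fst i) (snd i)" "y \<notin> A" by (auto simp: U_def)
      then have "i \<in> K" using C(2) by blast
      then have "cball (fst i) (snd i) \<subseteq> G" by (auto simp: K_def split: prod.splits)
      then show "y \<in> G - A" using i by auto
    qed
  qed (use GAb in auto)
  also have "\<dots> < ennreal (\<delta> * e)" by (rule GA)
  finally have lt: "ennreal \<delta> * emeasure lborel U < ennreal \<delta> * ennreal e"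
    using d e by (simp add: ennreal_mult)
  have Ule: "emeasure lborel U < ennreal e"
  proof (rule ccontr)
    assume "\<not> emeasure lborel U < ennreal e"
    then have "ennreal e \<le> emeasure lborel U" by simp
    then have "ennreal \<delta> * ennreal e \<le> ennreal \<delta> * emeasure lborel U" by (rule mult_left_mono) simp
    with lt show False by simp
  qed
  show "\<exists>T. S \<subseteq> T \<and> T \<in> lmeasurable \<and> measure lebesgue T \<le> e"
  proof (intro exI conjI)
    show "S \<subseteq> (S - U) \<union> U" by auto
    have Utop: "emeasure lborel U < \<top>" using Ule ennreal_less_top order.strict_trans by blast
    have Ul: "U \<in> lmeasurable"
      using Ub Utop by (intro fmeasurableI) (auto simp: sets_completionI_sets emeasure_completion main_part_sets)
    have SU: "S - U \<in> lmeasurable" using C(4) unfolding U_def by (rule negligible_imp_measurable)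
    show "(S - U) \<union> U \<in> lmeasurable" using fmeasurable.Un[OF SU Ul] .
    have "measure lebesgue ((S - U) \<union> U) \<le> measure lebesgue (S - U) + measure lebesgue U"
      using Ul SU by (intro measure_Un_le) auto
    also have "measure lebesgue (S - U) = 0" using C(4) unfolding U_def by (rule negligible_imp_measure0)
    also have "measure lebesgue U = measure lborel U" using Ub by (simp add: measure_completion)
    also have "measure lborel U \<le> e" using Ule e by (simp add: measure_def enn2real_leI less_imp_le)
    finally show "measure lebesgue ((S - U) \<union> U) \<le> e" by simp
  qed
qed


definition dens :: "real set \<Rightarrow> real \<Rightarrow> bool" where
 "dens A x \<longleftrightarrow> (\<forall>k::nat. \<exists>N::nat. \<forall>n\<ge>N. ennreal ((1 - 1/Suc k) * (2/Suc n)) \<le> emeasure lborel (A \<inter> cball x (1/Suc n)))"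

lemma emeasure_cball_fin: "emeasure lborel (B \<inter> cball (x::real) r) \<noteq> \<top>"
proof -
  have "emeasure lborel (B \<inter> cball x r) \<le> emeasure lborel {x - \<bar>r\<bar>..x + \<bar>r\<bar>}"
    by (rule emeasure_mono) (auto simp: dist_real_def)
  also have "\<dots> < \<top>" by simp
  finally show ?thesis by simp
qed

lemma dens_thm:
  assumes A: "A \<in> sets borel"
  shows "AE x in lborel. x \<in> A \<longrightarrow> dens A x"
proof -
  define S where "S k = {x \<in> A. \<forall>N. \<exists>n\<ge>N. emeasure lborel (A \<inter> cball x (1/Suc n)) < ennreal ((1 - 1/Suc k) * (2/Suc n))}" for k :: nat
  have negS: "negligible (S k)" for k
  proof (rule neg_bad[OF A, of "1/Suc k"])
    show "S k \<subseteq> A" by (auto simp: S_def)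
    fix x d assume xS: "x \<in> S k" and d: "(0::real) < d"
    obtain N where N: "inverse (real (Suc N)) < d" using reals_Archimedean[OF d] by blast
    obtain n where n: "n \<ge> N" and lt: "emeasure lborel (A \<inter> cball x (1/Suc n)) < ennreal ((1 - 1/Suc k) * (2/Suc n))"
      using xS by (auto simp: S_def)
    define r where "r = 1 / real (Suc n)"
    have r0: "0 < r" by (simp add: r_def)
    have "r \<le> 1 / real (Suc N)" unfolding r_def using n by (simp add: frac_le)
    then have rd: "r < d" using N by (simp add: inverse_eq_divide)
    have m1: "measure lborel (A \<inter> cball x r) < (1 - 1/Suc k) * (2*r)"
    proof -
      have "emeasure lborel (A \<inter> cball x r) = ennreal (measure lborel (A \<inter> cball x r))"
        by (rule emeasure_eq_ennreal_measure[OF emeasure_cball_fin])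
      with lt have "ennreal (measure lborel (A \<inter> cball x r)) < ennreal ((1 - 1/Suc k) * (2*r))"
        by (simp add: r_def)
      then show ?thesis by (simp add: ennreal_less_iff)
    qed
    have cb: "measure lborel (cball x r) = 2*r" using r0 by (simp add: cball_eq_atLeastAtMost)
    have eqc: "cball x r - A = (-A) \<inter> cball x r" by blast
    have "measure lborel (cball x r - A) = measure lborel (cball x r - (A \<inter> cball x r))"
      by (rule arg_cong[where f="measure lborel"]) blast
    also have "\<dots> = measure lborel (cball x r) - measure lborel (A \<inter> cball x r)"
      by (rule measure_Diff) (use A emeasure_cball_fin[of UNIV x r] in auto)
    finally have m2: "measure lborel (cball x r - A) > (1/Suc k) * (2*r)"
      using m1 cb by (simp add: algebra_simps)
    have "emeasure lborel (cball x r - A) = ennreal (measure lborel (cball x r - A))"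
      by (rule emeasure_eq_ennreal_measure)
         (simp only: eqc emeasure_cball_fin not_False_eq_True)
    then have "ennreal (1/Suc k * (2*r)) < emeasure lborel (cball x r - A)"
      using m2 r0 by (simp add: ennreal_less_iff)
    then show "\<exists>r. 0 < r \<and> r < d \<and> ennreal (1/Suc k * (2*r)) < emeasure lborel (cball x r - A)"
      using r0 rd by blast
  qed simp
  have "negligible (\<Union>k. S k)" using negS by (intro negligible_countable_Union) auto
  moreover have "{x. \<not> (x \<in> A \<longrightarrow> dens A x)} \<subseteq> (\<Union>k. S k)"
  proof
    fix x assume "x \<in> {x. \<not> (x \<in> A \<longrightarrow> dens A x)}"
    then have xA: "x \<in> A" and nd: "\<not> dens A x" by auto
    from nd obtain k where "\<forall>N. \<exists>n\<ge>N. \<not> ennreal ((1 - 1/Suc k) * (2/Suc n)) \<le> emeasure lborel (A \<inter> cball x (1/Suc n))"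
      unfolding dens_def by blast
    then have "x \<in> S k" using xA unfolding S_def by (simp add: not_le)
    then show "x \<in> (\<Union>k. S k)" by blast
  qed
  ultimately have "AE x in lebesgue. x \<in> A \<longrightarrow> dens A x"
    unfolding eventually_ae_filter_negligible by blast
  then show ?thesis by (simp add: AE_completion_iff)
qed




lemma dens_mono:
  assumes A: "A \<in> sets borel" and B: "B \<in> sets borel"
    and AE: "AE w in lborel. w \<in> A \<longrightarrow> w \<in> B" and d: "dens A x"
  shows "dens B x"
proof -
  have "AE w in lborel. w \<notin> A - B" using AE by eventually_elim auto
  then have N: "A - B \<in> null_sets lborel"
    using AE_iff_null_sets[of "A - B" lborel] A B by auto
  have le: "emeasure lborel (A \<inter> c) \<le> emeasure lborel (B \<inter> c)" if c: "c \<in> sets borel" for c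
  proof -
    have "emeasure lborel (A \<inter> c) \<le> emeasure lborel ((B \<inter> c) \<union> (A - B))"
      by (rule emeasure_mono) (use B c N in auto)
    also have "\<dots> = emeasure lborel (B \<inter> c)"
      by (rule emeasure_Un_null_set) (use B c N in auto)
    finally show ?thesis .
  qed
  show ?thesis unfolding dens_def
  proof
    fix k
    obtain N where N: "\<forall>n\<ge>N. ennreal ((1 - 1/Suc k) * (2/Suc n)) \<le> emeasure lborel (A \<inter> cball x (1/Suc n))"
      using d unfolding dens_def by blast
    have "ennreal ((1 - 1/Suc k) * (2/Suc n)) \<le> emeasure lborel (B \<inter> cball x (1/Suc n))" if "n \<ge> N" for n
      using N that le[of "cball x (1/Suc n)"] by (meson order_trans sets_lborel borel_closed closed_cball)
    then show "\<exists>N. \<forall>n\<ge>N. ennreal ((1 - 1/Suc k) * (2/Suc n)) \<le> emeasure lborel (B \<inter> cball x (1/Suc n))"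
      by blast
  qed
qed

lemma dens_disj:
  assumes A: "A \<in> sets borel" and B: "B \<in> sets borel"
    and AE: "AE w in lborel. \<not> (w \<in> A \<and> w \<in> B)" and dA: "dens A x" and dB: "dens B x"
  shows False
proof -
  obtain N1 where N1: "\<forall>n\<ge>N1. ennreal ((1 - 1/Suc 3) * (2/Suc n)) \<le> emeasure lborel (A \<inter> cball x (1/Suc n))"
    using dA unfolding dens_def by blast
  obtain N2 where N2: "\<forall>n\<ge>N2. ennreal ((1 - 1/Suc 3) * (2/Suc n)) \<le> emeasure lborel (B \<inter> cball x (1/Suc n))"
    using dB unfolding dens_def by blast
  define n where "n = max N1 N2"
  define c where "c = cball x (1/Suc n)"
  have c: "c \<in> sets borel" by (simp add: c_def)
  have a: "ennreal (3/4 * (2/Suc n)) \<le> emeasure lborel (A \<inter> c)"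
    using N1 unfolding c_def n_def by (simp add: numeral_eq_Suc)
  have b: "ennreal (3/4 * (2/Suc n)) \<le> emeasure lborel (B \<inter> c)"
    using N2 unfolding c_def n_def by (simp add: numeral_eq_Suc)
  have "AE w in lborel. w \<notin> A \<inter> B" using AE by eventually_elim auto
  then have N: "A \<inter> B \<in> null_sets lborel"
    using AE_iff_null_sets[of "A \<inter> B" lborel] A B by auto
  have "(A \<inter> c) \<inter> (B \<inter> c) \<in> null_sets lborel"
    by (rule null_sets_subset[OF N]) (use c A B in auto)
  then have eqU: "emeasure lborel ((A \<inter> c) \<union> (B \<inter> c)) = emeasure lborel (A \<inter> c) + emeasure lborel (B \<inter> c)"
    by (intro emeasure_Un') (use A B c in auto)
  have "emeasure lborel (A \<inter> c) + emeasure lborel (B \<inter> c) = emeasure lborel ((A \<inter> c) \<union> (B \<inter> c))"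
    by (rule eqU[symmetric])
  also have "\<dots> \<le> emeasure lborel c"
    by (rule emeasure_mono) (use c in auto)
  also have "emeasure lborel c = ennreal (2/Suc n)"
    unfolding c_def by (subst emeasure_lborel_cball_real) auto
  finally have "emeasure lborel (A \<inter> c) + emeasure lborel (B \<inter> c) \<le> ennreal (2/Suc n)" .
  moreover have "ennreal (3/4 * (2/Suc n)) + ennreal (3/4 * (2/Suc n)) \<le> emeasure lborel (A \<inter> c) + emeasure lborel (B \<inter> c)"
    using a b by (rule add_mono)
  ultimately have "ennreal (3/4 * (2/Suc n) + 3/4 * (2/Suc n)) \<le> ennreal (2/Suc n)"
    by (subst ennreal_plus) auto
  then have "3/4 * (2/Suc n) + 3/4 * (2/Suc n) \<le> 2/ (Suc n :: real)"
    by (subst (asm) ennreal_le_iff) auto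
  moreover have "(0::real) < 2 / real (Suc n)" by simp
  ultimately show False by linarith
qed

lemma dens_sub:
  assumes A: "A \<in> sets borel"
  shows "AE x in lborel. dens A x \<longrightarrow> x \<in> A"
proof -
  have "AE x in lborel. x \<in> -A \<longrightarrow> dens (-A) x" using A by (intro dens_thm) auto
  then show ?thesis
  proof (rule AE_mp, intro AE_I2 impI)
    fix x assume h: "x \<in> -A \<longrightarrow> dens (-A) x" and d: "dens A x"
    show "x \<in> A"
    proof (rule ccontr)
      assume "x \<notin> A"
      then have "dens (-A) x" using h by auto
      then show False using dens_disj[of A "-A" x] d A by auto
    qed
  qed
qed



lemma space_unitI[simp]: "space unitI = {0..1}"
  by (simp add: unitI_def space_restrict_space)

lemma sets_unitI_iff: "A \<in> sets unitI \<longleftrightarrow> A \<in> sets borel \<and> A \<subseteq> {0..1}"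
  unfolding unitI_def by (subst sets_restrict_space_iff) auto

lemma emeasure_unitI: "A \<in> sets unitI \<Longrightarrow> emeasure unitI A = emeasure lborel A"
  unfolding unitI_def by (subst emeasure_restrict_space) (auto simp: sets_restrict_space_iff)

lemma AE_unitI: "(AE x in unitI. P x) \<longleftrightarrow> (AE x in lborel. x \<in> {0..1} \<longrightarrow> P x)"
  unfolding unitI_def by (rule AE_restrict_space_iff) auto

lemma prob_space_unitI: "prob_space unitI"
  unfolding unitI_def by (rule prob_space_restrict_space) auto

interpretation uL: prob_space unitI by (rule prob_space_unitI)

interpretation uLL: pair_sigma_finite unitI unitI ..

lemma borel_meas_unitI: "f \<in> borel_measurable borel \<Longrightarrow> f \<in> borel_measurable unitI"
  unfolding unitI_def by (rule measurable_restrict_space1) simp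

lemma pred_AE_unitI:
  assumes R: "Measurable.pred (N \<Otimes>\<^sub>M unitI) (\<lambda>q. R (fst q) (snd q))"
  shows "Measurable.pred N (\<lambda>p. AE w in unitI. R p w)"
proof -
  define Q where "Q = {q \<in> space (N \<Otimes>\<^sub>M unitI). \<not> R (fst q) (snd q)}"
  have Q: "Q \<in> sets (N \<Otimes>\<^sub>M unitI)" unfolding Q_def using R by measurable
  have eq: "(AE w in unitI. R p w) \<longleftrightarrow> emeasure unitI (Pair p -` Q) = 0" if p: "p \<in> space N" for p
  proof (rule AE_iff_measurable)
    show "Pair p -` Q \<in> sets unitI" using Q by (rule sets_Pair1)
    show "{x \<in> space unitI. \<not> R p x} = Pair p -` Q" using p by (auto simp: Q_def space_pair_measure)
  qed
  have m: "(\<lambda>p. emeasure unitI (Pair p -` Q)) \<in> borel_measurable N"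
    using Q by (rule uL.measurable_emeasure_Pair)
  have "Measurable.pred N (\<lambda>p. emeasure unitI (Pair p -` Q) = 0)" using m by measurable
  then show ?thesis by (rule measurable_cong[THEN iffD1, rotated]) (use eq in auto)
qed

lemma pred_dens_sect:
  assumes R: "Measurable.pred (N \<Otimes>\<^sub>M unitI) (\<lambda>q. R (fst q) (snd q))"
    and c[measurable]: "c \<in> borel_measurable N"
  shows "Measurable.pred N (\<lambda>p. dens {w \<in> {0..1}. R p w} (c p))"
proof -
  define Q where "Q n = {q \<in> space (N \<Otimes>\<^sub>M unitI). R (fst q) (snd q) \<and> dist (snd q) (c (fst q)) \<le> 1 / Suc n}" for n :: nat
  have Q: "Q n \<in> sets (N \<Otimes>\<^sub>M unitI)" for n
  proof -
    have s[measurable]: "(\<lambda>q. snd q) \<in> borel_measurable (N \<Otimes>\<^sub>M unitI)"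
      by (rule measurable_compose[OF measurable_snd borel_meas_unitI]) simp
    have "Measurable.pred (N \<Otimes>\<^sub>M unitI) (\<lambda>q. dist (snd q) (c (fst q)) \<le> 1 / Suc n)"
      by measurable
    then show ?thesis unfolding Q_def using R by measurable
  qed
  have eq: "emeasure lborel ({w \<in> {0..1}. R p w} \<inter> cball (c p) (1/Suc n)) = emeasure unitI (Pair p -` Q n)"
    if p: "p \<in> space N" for p n
  proof -
    have "Pair p -` Q n = {w \<in> {0..1}. R p w} \<inter> cball (c p) (1/Suc n)"
      using p by (auto simp: Q_def space_pair_measure dist_commute)
    moreover have "Pair p -` Q n \<in> sets unitI" using Q by (rule sets_Pair1)
    ultimately show ?thesis by (simp add: emeasure_unitI)
  qed
  have m[measurable]: "(\<lambda>p. emeasure unitI (Pair p -` Q n)) \<in> borel_measurable N" for n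
    using Q by (rule uL.measurable_emeasure_Pair)
  have "Measurable.pred N (\<lambda>p. \<forall>k::nat. \<exists>N::nat. \<forall>n\<ge>N. ennreal ((1 - 1/Suc k) * (2/Suc n)) \<le> emeasure unitI (Pair p -` Q n))"
    by measurable
  then show ?thesis
    by (rule measurable_cong[THEN iffD1, rotated]) (use eq in \<open>auto simp: dens_def\<close>)
qed



lemma kernel_construct:
  fixes W :: "real \<Rightarrow> real \<Rightarrow> real"
  assumes meas[measurable]: "(\<lambda>(x,y). W x y) \<in> borel_measurable (unitI \<Otimes>\<^sub>M unitI)"
    and range: "\<forall>x\<in>{0..1}. \<forall>y\<in>{0..1}. 0 \<le> W x y \<and> W x y \<le> 1"
    and F1: "AE x in unitI. AE y in unitI. W x y > 0 \<longrightarrow> (AE z in unitI. W y z > 0 \<longrightarrow> W x z = 1)"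
    and F2: "AE x in unitI. AE y in unitI. W x y > 0 \<longrightarrow> (AE w in unitI. W w x > 0 \<longrightarrow> W w y = 1)"
    and G: "AE x in unitI. AE w in unitI. \<not> (W x w > 0 \<and> W w x > 0)"
  shows "\<exists>prec W'. ordered_unitI prec \<and> is_kernel prec W' \<and>
           (AE p in unitI \<Otimes>\<^sub>M unitI. W (fst p) (snd p) = W' (fst p) (snd p))"
proof -
  define Mc where "Mc y = {w \<in> {0..1}. W w y > 0}" for y
  define Vc where "Vc y = {w \<in> {0..1}. W w y = 1}" for y
  define Nr where "Nr x = {w \<in> {0..1}. W x w > 0}" for x
  define good where "good x \<longleftrightarrow> (AE w in unitI. \<not> (W x w > 0 \<and> W w x > 0))" for x
  define P where "P x y \<longleftrightarrow> x \<in> {0..1} \<and> y \<in> {0..1} \<and> good x \<and> good y \<and> dens (Mc y) x \<and> dens (Nr x) y \<and>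
      (AE w in unitI. W w x > 0 \<longrightarrow> W w y = 1) \<and> (AE w in unitI. W y w > 0 \<longrightarrow> W x w = 1)" for x y
  define S where "S x y \<longleftrightarrow> dens (Vc y) x" for x y
  define W' where "W' x y = (if P x y then (if S x y then 1 else W x y) else 0)" for x y

  have mW1: "(\<lambda>w. W w y) \<in> borel_measurable unitI" if "y \<in> {0..1}" for y
    by (rule measurable_Pair_compose_split[OF meas]) (use that in auto)
  have mW2: "(\<lambda>w. W x w) \<in> borel_measurable unitI" if "x \<in> {0..1}" for x
    by (rule measurable_Pair_compose_split[OF meas]) (use that in auto)
  have bset: "{w \<in> {0..1}. Q (f w)} \<in> sets borel" if "f \<in> borel_measurable unitI" "Measurable.pred borel Q" for f Q
  proof -
    have "{w \<in> space unitI. Q (f w)} \<in> sets unitI" using that by measurable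
    then show ?thesis by (simp add: sets_unitI_iff)
  qed
  have Mcb: "Mc y \<in> sets borel" if "y \<in> {0..1}" for y
    unfolding Mc_def by (rule bset[OF mW1[OF that]]) measurable
  have Vcb: "Vc y \<in> sets borel" if "y \<in> {0..1}" for y
    unfolding Vc_def by (rule bset[OF mW1[OF that]]) measurable
  have Nrb: "Nr x \<in> sets borel" if "x \<in> {0..1}" for x
    unfolding Nr_def by (rule bset[OF mW2[OF that]]) measurable
  have toL: "AE w in lborel. w \<in> {0..1} \<longrightarrow> Q w" if "AE w in unitI. Q w" for Q
    using that by (simp add: AE_unitI)

  have trans: "P x z \<and> S x z" if Pxy: "P x y" and Pyz: "P y z" for x y z
  proof -
    have x: "x \<in> {0..1}" and y: "y \<in> {0..1}" and z: "z \<in> {0..1}" using Pxy Pyz by (auto simp: P_def)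
    have d1: "dens (Mc y) x" and a6: "AE w in unitI. W w x > 0 \<longrightarrow> W w y = 1"
      and a7: "AE w in unitI. W y w > 0 \<longrightarrow> W x w = 1" and gx: "good x"
      using Pxy by (auto simp: P_def)
    have d2: "dens (Nr y) z" and b6: "AE w in unitI. W w y > 0 \<longrightarrow> W w z = 1"
      and b7: "AE w in unitI. W z w > 0 \<longrightarrow> W y w = 1" and gz: "good z"
      using Pyz by (auto simp: P_def)
    have Sxz: "dens (Vc z) x"
    proof (rule dens_mono[OF Mcb[OF y] Vcb[OF z] _ d1])
      show "AE w in lborel. w \<in> Mc y \<longrightarrow> w \<in> Vc z"
        using toL[OF b6] by eventually_elim (auto simp: Mc_def Vc_def)
    qed
    have dMz: "dens (Mc z) x"
      by (rule dens_mono[OF Vcb[OF z] Mcb[OF z] _ Sxz]) (auto simp: Vc_def Mc_def)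
    have dNx: "dens (Nr x) z"
    proof (rule dens_mono[OF Nrb[OF y] Nrb[OF x] _ d2])
      show "AE w in lborel. w \<in> Nr y \<longrightarrow> w \<in> Nr x"
        using toL[OF a7] by eventually_elim (auto simp: Nr_def)
    qed
    have c6: "AE w in unitI. W w x > 0 \<longrightarrow> W w z = 1"
      using a6 b6 by eventually_elim auto
    have c7: "AE w in unitI. W z w > 0 \<longrightarrow> W x w = 1"
      using a7 b7 by eventually_elim auto
    show ?thesis using x z gx gz Sxz dMz dNx c6 c7 by (auto simp: P_def S_def)
  qed

  have irr: "\<not> P x x" for x
  proof
    assume Pxx: "P x x"
    then have x: "x \<in> {0..1}" and g: "good x" and d1: "dens (Mc x) x" and d2: "dens (Nr x) x"
      by (auto simp: P_def)
    have "AE w in lborel. \<not> (w \<in> Nr x \<and> w \<in> Mc x)"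
      using toL[OF g[unfolded good_def]] by eventually_elim (auto simp: Nr_def Mc_def)
    then show False using dens_disj[OF Nrb[OF x] Mcb[OF x] _ d2 d1] by simp
  qed

  have mfst[measurable]: "(\<lambda>p. fst p) \<in> borel_measurable (unitI \<Otimes>\<^sub>M unitI)"
    by (rule measurable_compose[OF measurable_fst borel_meas_unitI]) simp
  have msnd[measurable]: "(\<lambda>p. snd p) \<in> borel_measurable (unitI \<Otimes>\<^sub>M unitI)"
    by (rule measurable_compose[OF measurable_snd borel_meas_unitI]) simp
  have mgood[measurable]: "Measurable.pred unitI good"
    unfolding good_def by (rule pred_AE_unitI) measurable
  have mP0: "Measurable.pred (unitI \<Otimes>\<^sub>M unitI) (\<lambda>p. good (fst p) \<and> good (snd p) \<and> dens (Mc (snd p)) (fst p) \<and>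
      dens (Nr (fst p)) (snd p) \<and> (AE w in unitI. W w (fst p) > 0 \<longrightarrow> W w (snd p) = 1) \<and>
      (AE w in unitI. W (snd p) w > 0 \<longrightarrow> W (fst p) w = 1))"
  proof -
    have [measurable]: "Measurable.pred (unitI \<Otimes>\<^sub>M unitI) (\<lambda>p. dens (Mc (snd p)) (fst p))"
      unfolding Mc_def by (rule pred_dens_sect[where R="\<lambda>p w. W w (snd p) > 0"]) measurable
    have [measurable]: "Measurable.pred (unitI \<Otimes>\<^sub>M unitI) (\<lambda>p. dens (Nr (fst p)) (snd p))"
      unfolding Nr_def by (rule pred_dens_sect[where R="\<lambda>p w. W (fst p) w > 0"]) measurable
    have [measurable]: "Measurable.pred (unitI \<Otimes>\<^sub>M unitI) (\<lambda>p. AE w in unitI. W w (fst p) > 0 \<longrightarrow> W w (snd p) = 1)"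
      by (rule pred_AE_unitI[where R="\<lambda>p w. W w (fst p) > 0 \<longrightarrow> W w (snd p) = 1"]) measurable
    have [measurable]: "Measurable.pred (unitI \<Otimes>\<^sub>M unitI) (\<lambda>p. AE w in unitI. W (snd p) w > 0 \<longrightarrow> W (fst p) w = 1)"
      by (rule pred_AE_unitI[where R="\<lambda>p w. W (snd p) w > 0 \<longrightarrow> W (fst p) w = 1"]) measurable
    show ?thesis by measurable
  qed
  have mP[measurable]: "Measurable.pred (unitI \<Otimes>\<^sub>M unitI) (\<lambda>p. P (fst p) (snd p))"
    by (rule measurable_cong[THEN iffD1, OF _ mP0]) (auto simp: P_def space_pair_measure)
  have mS[measurable]: "Measurable.pred (unitI \<Otimes>\<^sub>M unitI) (\<lambda>p. S (fst p) (snd p))"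
    unfolding S_def Vc_def by (rule pred_dens_sect[where R="\<lambda>p w. W w (snd p) = 1"]) measurable
  have mW'[measurable]: "(\<lambda>(x,y). W' x y) \<in> borel_measurable (unitI \<Otimes>\<^sub>M unitI)"
    unfolding W'_def case_prod_beta by measurable

  have AEeq: "AE x in unitI. AE y in unitI. W x y = W' x y"
  proof -
    have Gb: "AE y in unitI. good y" using G unfolding good_def .
    have sp: "AE y in unitI. y \<in> {0..1}" by (rule AE_I2) simp
    have c: "AE x in unitI. AE y in unitI. W x y > 0 \<longrightarrow> dens (Nr x) y"
    proof (rule AE_I2)
      fix x assume "x \<in> space unitI"
      then have x: "x \<in> {0..1}" by simp
      have "AE y in lborel. y \<in> Nr x \<longrightarrow> dens (Nr x) y" by (rule dens_thm[OF Nrb[OF x]])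
      then show "AE y in unitI. W x y > 0 \<longrightarrow> dens (Nr x) y"
        unfolding AE_unitI by eventually_elim (auto simp: Nr_def)
    qed
    have d: "AE x in unitI. AE y in unitI. W x y > 0 \<longrightarrow> dens (Mc y) x"
    proof (rule uLL.AE_commute[THEN iffD2])
      show "{p \<in> space (unitI \<Otimes>\<^sub>M unitI). 0 < W (fst p) (snd p) \<longrightarrow> dens (Mc (snd p)) (fst p)} \<in> sets (unitI \<Otimes>\<^sub>M unitI)"
      proof -
        have [measurable]: "Measurable.pred (unitI \<Otimes>\<^sub>M unitI) (\<lambda>p. dens (Mc (snd p)) (fst p))"
          unfolding Mc_def by (rule pred_dens_sect[where R="\<lambda>p w. W w (snd p) > 0"]) measurable
        show ?thesis by measurable
      qed
      show "AE y in unitI. AE x in unitI. W x y > 0 \<longrightarrow> dens (Mc y) x"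
      proof (rule AE_I2)
        fix y assume "y \<in> space unitI"
        then have y: "y \<in> {0..1}" by simp
        have "AE x in lborel. x \<in> Mc y \<longrightarrow> dens (Mc y) x" by (rule dens_thm[OF Mcb[OF y]])
        then show "AE x in unitI. W x y > 0 \<longrightarrow> dens (Mc y) x"
          unfolding AE_unitI by eventually_elim (auto simp: Mc_def)
      qed
    qed
    have e: "AE x in unitI. AE y in unitI. S x y \<longrightarrow> W x y = 1"
    proof (rule uLL.AE_commute[THEN iffD2])
      show "{p \<in> space (unitI \<Otimes>\<^sub>M unitI). S (fst p) (snd p) \<longrightarrow> W (fst p) (snd p) = 1} \<in> sets (unitI \<Otimes>\<^sub>M unitI)"
        by measurable
      show "AE y in unitI. AE x in unitI. S x y \<longrightarrow> W x y = 1"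
      proof (rule AE_I2)
        fix y assume "y \<in> space unitI"
        then have y: "y \<in> {0..1}" by simp
        have "AE x in lborel. dens (Vc y) x \<longrightarrow> x \<in> Vc y" by (rule dens_sub[OF Vcb[OF y]])
        then show "AE x in unitI. S x y \<longrightarrow> W x y = 1"
          unfolding AE_unitI by eventually_elim (auto simp: Vc_def S_def)
      qed
    qed
    show ?thesis
      using G c d e F1 F2 sp
    proof eventually_elim
      case (elim x)
      note ex = elim
      show ?case
        using ex(2,3,4,5,6) Gb sp
      proof eventually_elim
        case (elim y)
        have x: "x \<in> {0..1}" using ex(7) .
        have y: "y \<in> {0..1}" using elim(7) .
        have gx: "good x" using ex(1) unfolding good_def .
        show ?case
        proof (cases "W x y > 0")
          case True
          then have "P x y" using elim gx x y by (auto simp: P_def)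
          then show ?thesis using elim True by (auto simp: W'_def)
        next
          case False
          then have "W x y = 0" using range x y by force
          then show ?thesis using elim by (auto simp: W'_def)
        qed
      qed
    qed
  qed

  show ?thesis
  proof (intro exI conjI)
    show "ordered_unitI P"
      unfolding ordered_unitI_def strict_po_on_def
    proof (intro conjI ballI impI)
      show "\<not> P x x" for x by (rule irr)
      show "P x z" if "P x y \<and> P y z" for x y z using trans that by blast
      have "{(x,y) \<in> {0..1}\<times>{0..1}. P x y} = {p \<in> space (unitI \<Otimes>\<^sub>M unitI). P (fst p) (snd p)}"
        by (auto simp: space_pair_measure)
      then show "{(x,y) \<in> {0..1}\<times>{0..1}. P x y} \<in> sets (unitI \<Otimes>\<^sub>M unitI)"
        using mP by (simp add: pred_def)
    qed
    show "is_kernel P W'"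
      unfolding is_kernel_def
    proof (intro conjI ballI impI)
      show "(\<lambda>(x,y). W' x y) \<in> borel_measurable (unitI \<Otimes>\<^sub>M unitI)" by (rule mW')
      show "0 \<le> W' x y" if "x \<in> {0..1}" "y \<in> {0..1}" for x y :: real
        using range that by (auto simp: W'_def)
      show "W' x y \<le> 1" if "x \<in> {0..1}" "y \<in> {0..1}" for x y :: real
        using range that by (auto simp: W'_def)
      show "P x y" if "W' x y > 0" for x y :: real using that by (auto simp: W'_def split: if_splits)
      show "W' x z = 1" if "W' x y > 0 \<and> W' y z > 0" for x y z :: real
      proof -
        have "P x y" "P y z" using that by (auto simp: W'_def split: if_splits)
        then have "P x z \<and> S x z" by (rule trans)
        then show ?thesis by (simp add: W'_def)
      qed
    qed
    show "AE p in unitI \<Otimes>\<^sub>M unitI. W (fst p) (snd p) = W' (fst p) (snd p)"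
      by (rule uLL.AE_pair_iff[THEN iffD1, OF _ AEeq]) measurable
  qed
qed



interpretation uP: product_sigma_finite "\<lambda>_::nat. unitI"
  by (simp add: product_sigma_finite_def uL.sigma_finite_measure_axioms)

abbreviation "P3 \<equiv> PiM {1..3} (\<lambda>_::nat. unitI)"

lemma PiM3_comp[measurable]: "i \<in> {1..3} \<Longrightarrow> (\<lambda>x. x i) \<in> measurable P3 unitI"
  by (rule measurable_component_singleton)

interpretation P3: prob_space P3 by (rule prob_space_PiM) (simp add: prob_space_unitI)

lemma space_P3_mem: "x \<in> space P3 \<Longrightarrow> i \<in> {1..3} \<Longrightarrow> x i \<in> {0..1}"
  by (auto simp: space_PiM)

lemma AE_single:
  assumes "AE y in PiM {i} (\<lambda>_::nat. unitI). Q y"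
  shows "AE a in unitI. Q (\<lambda>j\<in>{i}. a)"
proof -
  have m: "(\<lambda>a. \<lambda>j\<in>{i}. a) \<in> measurable unitI (PiM {i} (\<lambda>_::nat. unitI))"
    by (rule measurable_restrict) simp
  have "AE y in distr unitI (PiM {i} (\<lambda>_::nat. unitI)) (\<lambda>a. \<lambda>j\<in>{i}. a). Q y"
    by (subst uP.distr_component[of i]) (rule assms)
  then show ?thesis by (rule AE_distrD[OF m])
qed

lemma AE_split1:
  fixes i :: nat
  assumes iJ: "i \<notin> J" "finite J" and AE: "AE x in PiM (insert i J) (\<lambda>_. unitI). Q x"
  shows "AE a in unitI. AE y in PiM J (\<lambda>_. unitI). Q (merge {i} J (\<lambda>j\<in>{i}. a, y))"
proof -
  interpret pJ: pair_sigma_finite "PiM {i} (\<lambda>_::nat. unitI)" "PiM J (\<lambda>_::nat. unitI)"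
  proof -
    interpret A: finite_product_sigma_finite "\<lambda>_::nat. unitI" "{i}" by standard simp
    interpret B: finite_product_sigma_finite "\<lambda>_::nat. unitI" J by standard (simp add: iJ)
    show "pair_sigma_finite (PiM {i} (\<lambda>_::nat. unitI)) (PiM J (\<lambda>_::nat. unitI))" ..
  qed
  have eq: "{i} \<union> J = insert i J" by auto
  have d: "distr (PiM {i} (\<lambda>_. unitI) \<Otimes>\<^sub>M PiM J (\<lambda>_. unitI)) (PiM ({i} \<union> J) (\<lambda>_. unitI)) (merge {i} J) = PiM ({i} \<union> J) (\<lambda>_. unitI)"
    by (rule uP.distr_merge) (use iJ in auto)
  have "AE x in distr (PiM {i} (\<lambda>_. unitI) \<Otimes>\<^sub>M PiM J (\<lambda>_. unitI)) (PiM ({i} \<union> J) (\<lambda>_. unitI)) (merge {i} J). Q x"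
    unfolding d unfolding eq by (rule AE)
  then have "AE z in PiM {i} (\<lambda>_. unitI) \<Otimes>\<^sub>M PiM J (\<lambda>_. unitI). Q (merge {i} J z)"
    by (rule AE_distrD[OF measurable_merge])
  then have "AE x in PiM {i} (\<lambda>_. unitI). AE y in PiM J (\<lambda>_. unitI). Q (merge {i} J (x, y))"
    by (rule pJ.AE_pair)
  then show ?thesis by (rule AE_single)
qed

lemma AE_PiM3_iter:
  assumes "AE x in PiM {1..3} (\<lambda>_::nat. unitI). R (x 1) (x 2) (x 3)"
  shows "AE a in unitI. AE b in unitI. AE c in unitI. R a b c"
proof -
  have e1: "{1..3::nat} = insert 1 {2,3}" by auto
  have "AE a in unitI. AE y in PiM {2,3::nat} (\<lambda>_. unitI). R a (y 2) (y 3)"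
    using AE_split1[of 1 "{2,3::nat}" "\<lambda>x. R (x 1) (x 2) (x 3)"] assms[unfolded e1]
    by (simp add: merge_def)
  then show ?thesis
  proof eventually_elim
    case (elim a)
    have "AE b in unitI. AE y in PiM {3::nat} (\<lambda>_. unitI). R a b (y 3)"
      using AE_split1[of 2 "{3::nat}" "\<lambda>y. R a (y 2) (y 3)"] elim
      by (simp add: merge_def)
    then show ?case
    proof eventually_elim
      case (elim b)
      show ?case using AE_single[OF elim] by simp
    qed
  qed
qed

lemma AE_PiM3_perm:
  assumes f: "bij_betw f {1..3::nat} {1..3}"
    and AE: "AE x in PiM {1..3} (\<lambda>_::nat. unitI). Q x"
  shows "AE x in PiM {1..3} (\<lambda>_::nat. unitI). Q (\<lambda>n\<in>{1..3}. x (f n))"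
proof -
  have d: "distr (PiM {1..3} (\<lambda>_::nat. unitI)) (PiM {1..3} (\<lambda>_. unitI)) (\<lambda>\<omega>. \<lambda>n\<in>{1..3}. \<omega> (f n)) = PiM {1..3} (\<lambda>_. unitI)"
  proof -
    have "f \<in> {1..3} \<rightarrow> {1..3}" "inj_on f {1..3}" using f by (auto simp: bij_betw_def)
    from distr_PiM_reindex[of "{1..3::nat}" "\<lambda>_. unitI", OF prob_space_unitI this(2,1)]
    show ?thesis by simp
  qed
  have m: "(\<lambda>\<omega>. \<lambda>n\<in>{1..3}. \<omega> (f n)) \<in> measurable (PiM {1..3} (\<lambda>_::nat. unitI)) (PiM {1..3} (\<lambda>_. unitI))"
    using f by (intro measurable_restrict measurable_component_singleton) (auto simp: bij_betw_def)
  have "AE x in distr (PiM {1..3} (\<lambda>_::nat. unitI)) (PiM {1..3} (\<lambda>_. unitI)) (\<lambda>\<omega>. \<lambda>n\<in>{1..3}. \<omega> (f n)). Q x"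
    unfolding d by (rule AE)
  then show ?thesis by (rule AE_distrD[OF m])
qed



abbreviation "SS \<equiv> sample_space"

lemma SS_def': "SS = PiM UNIV (\<lambda>_. unitI)" by (simp add: sample_space_def)

interpretation SS: prob_space SS
  unfolding sample_space_def by (rule prob_space_PiM) (simp add: prob_space_unitI)

lemma SS_comp[measurable]: "(\<lambda>\<omega>. \<omega> i) \<in> measurable SS unitI"
  unfolding sample_space_def by (rule measurable_component_singleton) simp

lemma SS_space: "\<omega> \<in> space SS \<Longrightarrow> \<omega> i \<in> {0..1}"
  by (auto simp: sample_space_def space_PiM)

lemma SS_reindex:
  fixes f :: "'i \<Rightarrow> nat + nat \<times> nat"
  assumes f: "inj_on f I"
  shows "distr SS (PiM I (\<lambda>_. unitI)) (\<lambda>\<omega>. \<lambda>n\<in>I. \<omega> (f n)) = PiM I (\<lambda>_. unitI)"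
  unfolding sample_space_def
  using distr_PiM_reindex[of UNIV "\<lambda>_. unitI" f I] f by (simp add: prob_space_unitI)

lemma SS_reindex_meas:
  fixes f :: "'i \<Rightarrow> nat + nat \<times> nat"
  shows "(\<lambda>\<omega>. \<lambda>n\<in>I. \<omega> (f n)) \<in> measurable SS (PiM I (\<lambda>_. unitI))"
  by (intro measurable_restrict SS_comp)

lemma AE_SS_from:
  fixes f :: "'i \<Rightarrow> nat + nat \<times> nat"
  assumes f: "inj_on f I" and AE: "AE x in PiM I (\<lambda>_. unitI). Q x"
  shows "AE \<omega> in SS. Q (\<lambda>n\<in>I. \<omega> (f n))"
proof -
  have "AE x in distr SS (PiM I (\<lambda>_. unitI)) (\<lambda>\<omega>. \<lambda>n\<in>I. \<omega> (f n)). Q x"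
    unfolding SS_reindex[OF f] by (rule AE)
  then show ?thesis by (rule AE_distrD[OF SS_reindex_meas])
qed

lemma AE_SS_to:
  fixes f :: "'i \<Rightarrow> nat + nat \<times> nat"
  assumes f: "inj_on f I" and Q: "Measurable.pred (PiM I (\<lambda>_. unitI)) Q"
    and AE: "AE \<omega> in SS. Q (\<lambda>n\<in>I. \<omega> (f n))"
  shows "AE x in PiM I (\<lambda>_. unitI). Q x"
proof -
  have "AE x in distr SS (PiM I (\<lambda>_. unitI)) (\<lambda>\<omega>. \<lambda>n\<in>I. \<omega> (f n)). Q x"
    by (subst AE_distr_iff[OF SS_reindex_meas]) (use Q AE in \<open>auto simp: pred_def\<close>)
  then show ?thesis unfolding SS_reindex[OF f] .
qed

lemma AE_SS_pair:
  assumes ij: "i \<noteq> j" and AE: "AE p in unitI \<Otimes>\<^sub>M unitI. Q (fst p) (snd p)"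
  shows "AE \<omega> in SS. Q (\<omega> (Inl i)) (\<omega> (Inl j))"
proof -
  define f where "f b = (if b then Inl i else Inl j :: nat + nat \<times> nat)" for b :: bool
  have inj: "inj_on f UNIV" using ij by (auto simp: inj_on_def f_def split: if_splits)
  have cb: "case_bool unitI unitI = (\<lambda>_. unitI)" by (rule ext) (simp split: bool.split)
  have eq: "unitI \<Otimes>\<^sub>M unitI = distr (PiM UNIV (\<lambda>_::bool. unitI)) (unitI \<Otimes>\<^sub>M unitI) (\<lambda>x. (x True, x False))"
    using pair_measure_eq_distr_PiM[of unitI unitI] by (simp add: cb uL.sigma_finite_measure_axioms)
  have "AE p in distr (PiM UNIV (\<lambda>_::bool. unitI)) (unitI \<Otimes>\<^sub>M unitI) (\<lambda>x. (x True, x False)). Q (fst p) (snd p)"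
    unfolding eq[symmetric] by (rule AE)
  moreover have m: "(\<lambda>x. (x True, x False)) \<in> measurable (PiM UNIV (\<lambda>_::bool. unitI)) (unitI \<Otimes>\<^sub>M unitI)"
    by (intro measurable_Pair measurable_component_singleton) auto
  ultimately have "AE x in PiM UNIV (\<lambda>_::bool. unitI). Q (x True) (x False)"
    using AE_distrD[OF m] by fastforce
  from AE_SS_from[OF inj this] show ?thesis by (simp add: f_def)
qed



lemma from_iv:
  fixes W :: "real \<Rightarrow> real \<Rightarrow> real"
  assumes H1: "AE x in P3. W (x 1) (x 2) * W (x 2) (x 3) * (1 - W (x 1) (x 3)) = 0"
    and H2: "AE x in P3. W (x 1) (x 2) * W (x 2) (x 3) * W (x 3) (x 1) = 0"
    and meas[measurable]: "(\<lambda>(x,y). W x y) \<in> borel_measurable (unitI \<Otimes>\<^sub>M unitI)"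
  shows "AE x in unitI. AE y in unitI. W x y > 0 \<longrightarrow> (AE z in unitI. W y z > 0 \<longrightarrow> W x z = 1)"
    and "AE x in unitI. AE y in unitI. W x y > 0 \<longrightarrow> (AE w in unitI. W w x > 0 \<longrightarrow> W w y = 1)"
    and "AE x in unitI. AE w in unitI. \<not> (W x w > 0 \<and> W w x > 0)"
proof -
  define T where "T a b c \<longleftrightarrow> (W a b > 0 \<and> W b c > 0 \<longrightarrow> W a c = 1)" for a b c
  have T: "AE x in P3. T (x 1) (x 2) (x 3)"
    using H1 by eventually_elim (auto simp: T_def)
  have perm: "AE x in P3. Q (x (f 1)) (x (f 2)) (x (f 3))"
    if "bij_betw f {1..3::nat} {1..3}" "AE x in P3. Q (x 1) (x 2) (x 3)" for f Q
  proof -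
    have f: "f 1 \<in> {1..3}" "f 2 \<in> {1..3}" "f 3 \<in> {1..3}"
      using that(1) by (auto simp: bij_betw_def)
    have "AE x in P3. (\<lambda>x. Q (x 1) (x 2) (x 3)) (\<lambda>n\<in>{1..3}. x (f n))"
      by (rule AE_PiM3_perm[OF that])
    then show ?thesis by simp
  qed
  define f312 where "f312 = (\<lambda>n::nat. if n = 1 then 3 else if n = 2 then 1 else if n = 3 then 2 else n)"
  define f213 where "f213 = (\<lambda>n::nat. if n = 1 then 2 else if n = 2 then 1 else n)"
  have e3: "{1..3::nat} = {1,2,3}" by auto
  have b312: "bij_betw f312 {1..3::nat} {1..3}"
    unfolding e3 f312_def bij_betw_def inj_on_def by auto
  have b213: "bij_betw f213 {1..3::nat} {1..3}"
    unfolding e3 f213_def bij_betw_def inj_on_def by auto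
  show "AE x in unitI. AE y in unitI. W x y > 0 \<longrightarrow> (AE z in unitI. W y z > 0 \<longrightarrow> W x z = 1)"
    using AE_PiM3_iter[OF T]
  proof eventually_elim
    case (elim x)
    then show ?case
    proof eventually_elim
      case (elim y)
      show ?case
      proof
        assume p: "W x y > 0"
        from elim show "AE z in unitI. W y z > 0 \<longrightarrow> W x z = 1"
          by eventually_elim (use p in \<open>auto simp: T_def\<close>)
      qed
    qed
  qed
  have T2: "AE x in P3. T (x 3) (x 1) (x 2)"
    using perm[OF b312 T] by (simp add: f312_def)
  show "AE x in unitI. AE y in unitI. W x y > 0 \<longrightarrow> (AE w in unitI. W w x > 0 \<longrightarrow> W w y = 1)"
    using AE_PiM3_iter[OF T2]
  proof eventually_elim
    case (elim x)
    then show ?case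
    proof eventually_elim
      case (elim y)
      show ?case
      proof
        assume p: "W x y > 0"
        from elim show "AE w in unitI. W w x > 0 \<longrightarrow> W w y = 1"
          by eventually_elim (use p in \<open>auto simp: T_def\<close>)
      qed
    qed
  qed
  define C where "C a b \<longleftrightarrow> W a b > 0 \<and> W b a > 0" for a b
  have Csym: "C a b = C b a" for a b by (auto simp: C_def)
  have Ta: "AE x in P3. T (x 2) (x 1) (x 3)"
    using perm[OF b213 T] by (simp add: f213_def)
  have Tb: "AE x in P3. T (x 3) (x 1) (x 2)" by (rule T2)
  have Hc: "AE x in P3. W (x 2) (x 1) * W (x 1) (x 3) * W (x 3) (x 2) = 0"
    using perm[OF b213 H2] by (simp add: f213_def)
  have "AE x in P3. \<not> (C (x 2) (x 1) \<and> C (x 1) (x 3))"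
    using Ta Tb Hc
  proof eventually_elim
    case (elim x)
    show ?case
    proof
      assume c: "C (x 2) (x 1) \<and> C (x 1) (x 3)"
      then have "W (x 2) (x 3) = 1" using elim(1) by (auto simp: C_def T_def)
      moreover have "W (x 3) (x 2) = 1" using c elim(2) by (auto simp: C_def T_def)
      ultimately show False using c elim(3) by (auto simp: C_def)
    qed
  qed
  from AE_PiM3_iter[OF this]
  have I: "AE y in unitI. AE x in unitI. AE z in unitI. \<not> (C x y \<and> C y z)" .
  have "AE y in unitI. AE x in unitI. \<not> C x y"
    using I
  proof eventually_elim
    case (elim y)
    show ?case
    proof (cases "AE z in unitI. \<not> C y z")
      case True
      then show ?thesis by eventually_elim (simp add: Csym)
    next
      case False
      have "AE x in unitI. C x y \<longrightarrow> (AE z in unitI. \<not> C y z)"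
        using elim
      proof eventually_elim
        case (elim x)
        show ?case
        proof
          assume p: "C x y"
          from elim show "AE z in unitI. \<not> C y z" by eventually_elim (use p in auto)
        qed
      qed
      then show ?thesis by eventually_elim (use False in auto)
    qed
  qed
  then show "AE x in unitI. AE w in unitI. \<not> (W x w > 0 \<and> W w x > 0)"
    by eventually_elim (simp add: C_def conj_commute)
qed


lemma iv_iff:
  fixes W :: "real \<Rightarrow> real \<Rightarrow> real"
  assumes meas[measurable]: "(\<lambda>(x,y). W x y) \<in> borel_measurable (unitI \<Otimes>\<^sub>M unitI)"
    and range: "\<forall>x\<in>{0..1}. \<forall>y\<in>{0..1}. 0 \<le> W x y \<and> W x y \<le> 1"
  shows "(hom_density 3 D1 W = hom_density 3 D2 W \<and> hom_density 3 D3 W = 0) \<longleftrightarrow>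
    ((AE x in P3. W (x 1) (x 2) * W (x 2) (x 3) * (1 - W (x 1) (x 3)) = 0) \<and>
     (AE x in P3. W (x 1) (x 2) * W (x 2) (x 3) * W (x 3) (x 1) = 0))"
proof -
  have w01: "0 \<le> W (x i) (x j) \<and> W (x i) (x j) \<le> 1" if "x \<in> space P3" "i \<in> {1..3}" "j \<in> {1..3}" for x i j
    using range space_P3_mem[OF that(1,2)] space_P3_mem[OF that(1,3)] by blast
  have t1: "hom_density 3 D1 W = (\<integral>x. W (x 1) (x 2) * W (x 2) (x 3) \<partial>P3)"
    by (simp add: hom_density_def D1_def)
  have t2: "hom_density 3 D2 W = (\<integral>x. W (x 1) (x 2) * W (x 2) (x 3) * W (x 1) (x 3) \<partial>P3)"
    by (simp add: hom_density_def D2_def mult.assoc)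
  have t3: "hom_density 3 D3 W = (\<integral>x. W (x 1) (x 2) * W (x 2) (x 3) * W (x 3) (x 1) \<partial>P3)"
    by (simp add: hom_density_def D3_def mult.assoc)
  have int: "integrable P3 (\<lambda>x. W (x i) (x j) * W (x k) (x l) * g x)"
    if "i \<in> {1..3}" "j \<in> {1..3}" "k \<in> {1..3}" "l \<in> {1..3}"
      and g: "g \<in> borel_measurable P3" "\<And>x. x \<in> space P3 \<Longrightarrow> \<bar>g x\<bar> \<le> 1" for i j k l g
  proof (rule P3.integrable_const_bound[where B=1])
    show "AE x in P3. norm (W (x i) (x j) * W (x k) (x l) * g x) \<le> 1"
    proof (rule AE_I2)
      fix x assume x: "x \<in> space P3"
      have a: "\<bar>W (x i) (x j)\<bar> \<le> 1" "\<bar>W (x k) (x l)\<bar> \<le> 1" using w01[OF x] that by auto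
      have "\<bar>W (x i) (x j) * W (x k) (x l) * g x\<bar> = \<bar>W (x i) (x j)\<bar> * \<bar>W (x k) (x l)\<bar> * \<bar>g x\<bar>"
        by (simp add: abs_mult)
      also have "\<dots> \<le> 1 * 1 * 1"
        using a g(2)[OF x] by (intro mult_mono) auto
      finally show "norm (W (x i) (x j) * W (x k) (x l) * g x) \<le> 1" by simp
    qed
    show "(\<lambda>x. W (x i) (x j) * W (x k) (x l) * g x) \<in> borel_measurable P3"
      using that g by measurable
  qed
  have i1: "integrable P3 (\<lambda>x. W (x 1) (x 2) * W (x 2) (x 3) * 1)"
    by (rule int) auto
  have i2: "integrable P3 (\<lambda>x. W (x 1) (x 2) * W (x 2) (x 3) * W (x 1) (x 3))"
    by (rule int) (use w01 in auto)
  have i3: "integrable P3 (\<lambda>x. W (x 1) (x 2) * W (x 2) (x 3) * W (x 3) (x 1))"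
    by (rule int) (use w01 in auto)
  have ih: "integrable P3 (\<lambda>x. W (x 1) (x 2) * W (x 2) (x 3) * (1 - W (x 1) (x 3)))"
    by (rule int) (use w01 in \<open>auto simp: abs_le_iff\<close>)
  have d12: "hom_density 3 D1 W - hom_density 3 D2 W = (\<integral>x. W (x 1) (x 2) * W (x 2) (x 3) * (1 - W (x 1) (x 3)) \<partial>P3)"
    using i1 i2 unfolding t1 t2 by (subst Bochner_Integration.integral_diff[symmetric]) (simp_all add: algebra_simps)
  have e1: "(\<integral>x. W (x 1) (x 2) * W (x 2) (x 3) * (1 - W (x 1) (x 3)) \<partial>P3) = 0 \<longleftrightarrow>
       (AE x in P3. W (x 1) (x 2) * W (x 2) (x 3) * (1 - W (x 1) (x 3)) = 0)"
    by (rule integral_nonneg_eq_0_iff_AE[OF ih]) (rule AE_I2, use w01 in auto)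
  have e3: "(\<integral>x. W (x 1) (x 2) * W (x 2) (x 3) * W (x 3) (x 1) \<partial>P3) = 0 \<longleftrightarrow>
       (AE x in P3. W (x 1) (x 2) * W (x 2) (x 3) * W (x 3) (x 1) = 0)"
    by (rule integral_nonneg_eq_0_iff_AE[OF i3]) (rule AE_I2, use w01 in auto)
  show ?thesis using d12 e1 e3 t3 by auto
qed



lemma iii_ii:
  fixes W W' :: "real \<Rightarrow> real \<Rightarrow> real"
  assumes ord: "ordered_unitI prec" and ker: "is_kernel prec W'"
    and AE: "AE p in unitI \<Otimes>\<^sub>M unitI. W (fst p) (snd p) = W' (fst p) (snd p)"
  shows "AE \<omega> in SS. rand_is_poset W {1..} \<omega>"
proof -
  have A1: "AE \<omega> in SS. \<forall>ij::nat\<times>nat. fst ij \<noteq> snd ij \<longrightarrow>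
      W (\<omega> (Inl (fst ij))) (\<omega> (Inl (snd ij))) = W' (\<omega> (Inl (fst ij))) (\<omega> (Inl (snd ij)))"
  proof (subst AE_all_countable, intro allI)
    fix ij :: "nat \<times> nat"
    show "AE \<omega> in SS. fst ij \<noteq> snd ij \<longrightarrow>
      W (\<omega> (Inl (fst ij))) (\<omega> (Inl (snd ij))) = W' (\<omega> (Inl (fst ij))) (\<omega> (Inl (snd ij)))"
    proof (cases "fst ij = snd ij")
      case False
      from AE_SS_pair[OF False, of "\<lambda>a b. W a b = W' a b"] AE show ?thesis by simp
    qed simp
  qed
  have A2: "AE \<omega> in SS. \<forall>p. \<omega> (Inr p) \<noteq> 1"
  proof (subst AE_all_countable, intro allI)
    fix p
    have "AE x in unitI. x \<noteq> 1"
      unfolding AE_unitI using AE_lborel_singleton[of 1] by eventually_elim auto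
    then show "AE \<omega> in SS. \<omega> (Inr p) \<noteq> 1"
      unfolding sample_space_def by (rule AE_PiM_component[rotated 2]) (auto simp: prob_space_unitI)
  qed
  have A3: "AE \<omega> in SS. \<omega> \<in> space SS" by (rule AE_I2)
  show ?thesis
    using A1 A2 A3
  proof eventually_elim
    case (elim \<omega>)
    define X where "X i = \<omega> (Inl i)" for i
    have X01: "X i \<in> {0..1}" for i using SS_space[OF elim(3)] by (simp add: X_def)
    have xi01: "\<omega> (Inr p) \<in> {0..1}" for p using SS_space[OF elim(3)] by simp
    have WW: "i \<noteq> j \<Longrightarrow> W (X i) (X j) = W' (X i) (X j)" for i j
      using elim(1) by (auto simp: X_def)
    have po: "strict_po_on {0..1} prec" using ord by (simp add: ordered_unitI_def)
    have kp: "\<And>x y. x \<in> {0..1} \<Longrightarrow> y \<in> {0..1} \<Longrightarrow> W' x y > 0 \<Longrightarrow> prec x y"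
      and kt: "\<And>x y z. x \<in> {0..1} \<Longrightarrow> y \<in> {0..1} \<Longrightarrow> z \<in> {0..1} \<Longrightarrow> W' x y > 0 \<Longrightarrow> W' y z > 0 \<Longrightarrow> W' x z = 1"
      using ker unfolding is_kernel_def by blast+
    have pos: "W' (X i) (X j) > 0" if "rand_edge W \<omega> i j" for i j
    proof -
      have "i \<noteq> j" "\<omega> (Inr (i,j)) < W (X i) (X j)" using that by (auto simp: rand_edge_def X_def)
      moreover have "0 \<le> \<omega> (Inr (i,j))" using xi01[of "(i,j)"] by simp
      ultimately show ?thesis using WW by fastforce
    qed
    show ?case unfolding rand_is_poset_def strict_po_on_def
    proof (intro conjI ballI impI)
      show "\<not> rand_edge W \<omega> x x" for x by (simp add: rand_edge_def)
      fix x y z :: nat assume "rand_edge W \<omega> x y \<and> rand_edge W \<omega> y z"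
      then have e1: "rand_edge W \<omega> x y" and e2: "rand_edge W \<omega> y z" by auto
      have p1: "W' (X x) (X y) > 0" by (rule pos[OF e1])
      have p2: "W' (X y) (X z) > 0" by (rule pos[OF e2])
      have pr1: "prec (X x) (X y)" by (rule kp[OF X01 X01 p1])
      have pr2: "prec (X y) (X z)" by (rule kp[OF X01 X01 p2])
      have w1: "W' (X x) (X z) = 1" by (rule kt[OF X01 X01 X01 p1 p2])
      have xz: "x \<noteq> z"
      proof
        assume "x = z"
        then have "prec (X x) (X x)" using po pr1 pr2 X01 unfolding strict_po_on_def by blast
        then show False using po X01 unfolding strict_po_on_def by blast
      qed
      have "W (X x) (X z) = 1" using WW[OF xz] w1 by simp
      moreover have "\<omega> (Inr (x,z)) < 1" using xi01[of "(x,z)"] elim(2) by (metis atLeastAtMost_iff order_le_less)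
      ultimately show "rand_edge W \<omega> x z" using xz by (simp add: rand_edge_def X_def)
    qed
  qed
qed



abbreviation "P4 \<equiv> PiM {4..7} (\<lambda>_::nat. unitI)"
abbreviation "P7 \<equiv> PiM {1..7} (\<lambda>_::nat. unitI)"

lemma nn_lt: "a \<in> {0..1} \<Longrightarrow> (\<integral>\<^sup>+ t. indicator {t. t < a} t \<partial>unitI) = ennreal a"
proof -
  assume a: "a \<in> {0..1}"
  have "(\<integral>\<^sup>+ t. indicator {t. t < a} t \<partial>unitI) = (\<integral>\<^sup>+ t. indicator {0..<a} t \<partial>unitI)"
    by (rule nn_integral_cong) (auto simp: indicator_def)
  also have "\<dots> = emeasure unitI {0..<a}"
    using a by (intro nn_integral_indicator) (auto simp: sets_unitI_iff)
  also have "\<dots> = ennreal a" using a by (subst emeasure_unitI) (auto simp: sets_unitI_iff)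
  finally show ?thesis .
qed

lemma nn_ge: "a \<in> {0..1} \<Longrightarrow> (\<integral>\<^sup>+ t. indicator {t. \<not> t < a} t \<partial>unitI) = ennreal (1 - a)"
proof -
  assume a: "a \<in> {0..1}"
  have "(\<integral>\<^sup>+ t. indicator {t. \<not> t < a} t \<partial>unitI) = (\<integral>\<^sup>+ t. indicator {a..1} t \<partial>unitI)"
    using a by (intro nn_integral_cong) (auto simp: indicator_def)
  also have "\<dots> = emeasure unitI {a..1}"
    using a by (intro nn_integral_indicator) (auto simp: sets_unitI_iff)
  also have "\<dots> = ennreal (1 - a)" using a by (subst emeasure_unitI) (auto simp: sets_unitI_iff)
  finally show ?thesis .
qed

lemma prob_event:
  fixes g4 g5 g6 g7 :: "(nat \<Rightarrow> real) \<Rightarrow> real"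
  assumes m[measurable]: "g4 \<in> borel_measurable P3" "g5 \<in> borel_measurable P3" "g6 \<in> borel_measurable P3" "g7 \<in> borel_measurable P3"
    and r: "\<And>x. x \<in> space P3 \<Longrightarrow> g4 x \<in> {0..1} \<and> g5 x \<in> {0..1} \<and> g6 x \<in> {0..1} \<and> g7 x \<in> {0..1}"
  shows "emeasure P7 {z \<in> space P7. z 4 < g4 (restrict z {1..3}) \<and> z 5 < g5 (restrict z {1..3}) \<and>
            \<not> z 6 < g6 (restrict z {1..3}) \<and> z 7 < g7 (restrict z {1..3})}
     = (\<integral>\<^sup>+ x. ennreal (g4 x * g5 x * (1 - g6 x) * g7 x) \<partial>P3)"
proof -
  define E where "E z \<longleftrightarrow> z 4 < g4 (restrict z {1..3}) \<and> z 5 < g5 (restrict z {1..3}) \<and>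
            \<not> z 6 < g6 (restrict z {1..3}) \<and> z 7 < g7 (restrict z {1..3})" for z :: "nat \<Rightarrow> real"
  have rm[measurable]: "(\<lambda>z. restrict z {1..3}) \<in> measurable P7 P3"
    by (rule measurable_restrict_subset) auto
  have c7[measurable]: "i \<in> {1..7} \<Longrightarrow> (\<lambda>z. z i) \<in> borel_measurable P7" for i
  proof -
    assume i: "i \<in> {1..7}"
    have "(\<lambda>z. z i) \<in> measurable P7 unitI" using i by (rule measurable_component_singleton)
    then show ?thesis by (rule measurable_compose[OF _ borel_meas_unitI]) simp
  qed
  have sE: "{z \<in> space P7. E z} \<in> sets P7" unfolding E_def by measurable
  have un: "{1..7::nat} = {1..3} \<union> {4..7}" by auto
  have "emeasure P7 {z \<in> space P7. E z} = (\<integral>\<^sup>+ z. indicator {z \<in> space P7. E z} z \<partial>P7)"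
    using sE by simp
  also have "\<dots> = (\<integral>\<^sup>+ x. (\<integral>\<^sup>+ y. indicator {z \<in> space P7. E z} (merge {1..3} {4..7} (x, y)) \<partial>P4) \<partial>P3)"
  proof -
    have "(\<integral>\<^sup>+ z. indicator {z \<in> space P7. E z} z \<partial>PiM ({1..3} \<union> {4..7}) (\<lambda>_. unitI)) =
      (\<integral>\<^sup>+ x. (\<integral>\<^sup>+ y. indicator {z \<in> space P7. E z} (merge {1..3} {4..7} (x, y)) \<partial>P4) \<partial>P3)"
    proof (rule uP.product_nn_integral_fold)
      show "indicator {z \<in> space P7. E z} \<in> borel_measurable (PiM ({1..3} \<union> {4..7}) (\<lambda>_. unitI))"
        unfolding un[symmetric] using sE by (rule borel_measurable_indicator)
    qed auto
    then show ?thesis by (simp only: un[symmetric])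
  qed
  also have "\<dots> = (\<integral>\<^sup>+ x. ennreal (g4 x * g5 x * (1 - g6 x) * g7 x) \<partial>P3)"
  proof (rule nn_integral_cong)
    fix x assume x: "x \<in> space P3"
    have rx: "g4 x \<in> {0..1}" "g5 x \<in> {0..1}" "g6 x \<in> {0..1}" "g7 x \<in> {0..1}" using r[OF x] by auto
    define G where "G n = (if n = 4 then indicator {t. t < g4 x} else if n = 5 then indicator {t. t < g5 x}
       else if n = 6 then indicator {t. \<not> t < g6 x} else (indicator {t. t < g7 x} :: real \<Rightarrow> ennreal))" for n :: nat
    have mi: "\<And>A. A \<in> sets borel \<Longrightarrow> (indicator A :: real \<Rightarrow> ennreal) \<in> borel_measurable unitI"
      by (intro borel_meas_unitI borel_measurable_indicator)
    have "(\<integral>\<^sup>+ y. indicator {z \<in> space P7. E z} (merge {1..3} {4..7} (x, y)) \<partial>P4) = (\<integral>\<^sup>+ y. (\<Prod>n\<in>{4..7}. G n (y n)) \<partial>P4)"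
    proof (rule nn_integral_cong)
      fix y assume y: "y \<in> space P4"
      have mem: "merge {1..3} {4..7} (x, y) \<in> space P7"
        using x y unfolding un by (auto simp: space_PiM PiE_iff)
      have rs: "restrict (merge {1..3} {4..7} (x, y)) {1..3} = x"
        using x by (simp add: space_PiM)
      have e47: "{4..7::nat} = {4,5,6,7}" by auto
      show "indicator {z \<in> space P7. E z} (merge {1..3} {4..7} (x, y)) = (\<Prod>n\<in>{4..7}. G n (y n))"
        using mem rs by (simp add: E_def G_def e47 merge_def indicator_def)
    qed
    also have "\<dots> = (\<Prod>n\<in>{4..7}. \<integral>\<^sup>+ t. G n t \<partial>unitI)"
      by (rule uP.product_nn_integral_prod) (auto simp: G_def intro!: mi)
    also have "\<dots> = ennreal (g4 x * g5 x * (1 - g6 x) * g7 x)"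
    proof -
      have e47: "{4..7::nat} = {4,5,6,7}" by auto
      have "(\<Prod>n\<in>{4..7}. \<integral>\<^sup>+ t. G n t \<partial>unitI) =
        (\<integral>\<^sup>+ t. indicator {t. t < g4 x} t \<partial>unitI) * ((\<integral>\<^sup>+ t. indicator {t. t < g5 x} t \<partial>unitI) *
        ((\<integral>\<^sup>+ t. indicator {t. \<not> t < g6 x} t \<partial>unitI) * (\<integral>\<^sup>+ t. indicator {t. t < g7 x} t \<partial>unitI)))"
        by (simp add: e47 G_def)
      also have "\<dots> = ennreal (g4 x) * (ennreal (g5 x) * (ennreal (1 - g6 x) * ennreal (g7 x)))"
        using rx by (simp add: nn_lt nn_ge)
      also have "\<dots> = ennreal (g4 x * g5 x * (1 - g6 x) * g7 x)"
        using rx by (simp add: ennreal_mult mult.assoc)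
      finally show ?thesis .
    qed
    finally show "(\<integral>\<^sup>+ y. indicator {z \<in> space P7. E z} (merge {1..3} {4..7} (x, y)) \<partial>P4) =
      ennreal (g4 x * g5 x * (1 - g6 x) * g7 x)" .
  qed
  finally show ?thesis unfolding E_def .
qed


lemma ii_iv_gen:
  fixes W :: "real \<Rightarrow> real \<Rightarrow> real"
  assumes meas[measurable]: "(\<lambda>(x,y). W x y) \<in> borel_measurable (unitI \<Otimes>\<^sub>M unitI)"
    and m[measurable]: "g6 \<in> borel_measurable P3" "g7 \<in> borel_measurable P3"
    and r: "\<And>x. x \<in> space P3 \<Longrightarrow> W (x 1) (x 2) \<in> {0..1} \<and> W (x 2) (x 3) \<in> {0..1} \<and> g6 x \<in> {0..1} \<and> g7 x \<in> {0..1}"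
    and AE: "AE \<omega> in SS. \<not> (\<omega> (Inr (1,2)) < W (\<omega> (Inl 1)) (\<omega> (Inl 2)) \<and> \<omega> (Inr (2,3)) < W (\<omega> (Inl 2)) (\<omega> (Inl 3))
       \<and> \<not> \<omega> (Inr (1,3)) < g6 (\<lambda>n\<in>{1..3}. \<omega> (Inl n)) \<and> \<omega> (Inr (3,1)) < g7 (\<lambda>n\<in>{1..3}. \<omega> (Inl n)))"
  shows "AE x in P3. W (x 1) (x 2) * W (x 2) (x 3) * (1 - g6 x) * g7 x = 0"
proof -
  define f7 where "f7 n = (if n \<le> 3 then Inl n else if n = 4 then Inr (1,2) else if n = 5 then Inr (2,3)
     else if n = 6 then Inr (1,3) else (Inr (3,1) :: nat + nat \<times> nat))" for n :: nat
  have inj: "inj_on f7 {1..7}" by (auto simp: inj_on_def f7_def split: if_splits)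
  define g4 where "g4 x = W (x 1) (x 2)" for x :: "nat \<Rightarrow> real"
  define g5 where "g5 x = W (x 2) (x 3)" for x :: "nat \<Rightarrow> real"
  have mg[measurable]: "g4 \<in> borel_measurable P3" "g5 \<in> borel_measurable P3" unfolding g4_def g5_def by measurable
  define E where "E z \<longleftrightarrow> z 4 < g4 (restrict z {1..3}) \<and> z 5 < g5 (restrict z {1..3}) \<and>
            \<not> z 6 < g6 (restrict z {1..3}) \<and> z 7 < g7 (restrict z {1..3})" for z :: "nat \<Rightarrow> real"
  have rm[measurable]: "(\<lambda>z. restrict z {1..3}) \<in> measurable P7 P3"
    by (rule measurable_restrict_subset) auto
  have c7[measurable]: "i \<in> {1..7} \<Longrightarrow> (\<lambda>z. z i) \<in> borel_measurable P7" for i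
  proof -
    assume i: "i \<in> {1..7}"
    have "(\<lambda>z. z i) \<in> measurable P7 unitI" using i by (rule measurable_component_singleton)
    then show ?thesis by (rule measurable_compose[OF _ borel_meas_unitI]) simp
  qed
  have pE: "Measurable.pred P7 (\<lambda>z. \<not> E z)" unfolding E_def by measurable
  have pE': "Measurable.pred P7 E" unfolding E_def by measurable
  have rr: "restrict (\<lambda>n\<in>{1..7}. \<omega> (f7 n)) {1..3} = (\<lambda>n\<in>{1..3}. \<omega> (Inl n))" for \<omega>
    by (auto simp: f7_def fun_eq_iff)
  have "AE \<omega> in SS. \<not> E (\<lambda>n\<in>{1..7}. \<omega> (f7 n))"
  proof -
    have f7v: "f7 4 = Inr (1,2)" "f7 5 = Inr (2,3)" "f7 6 = Inr (1,3)" "f7 7 = Inr (3,1)"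
      "f7 1 = Inl 1" "f7 2 = Inl 2" "f7 3 = Inl 3"
      by (simp_all add: f7_def)
    have rr2: "(\<lambda>n\<in>{1..3}. \<omega> (f7 n)) = (\<lambda>n\<in>{1..3}. \<omega> (Inl n))" for \<omega> :: "nat + nat \<times> nat \<Rightarrow> real"
      by (auto simp: f7_def fun_eq_iff)
    show ?thesis using AE by eventually_elim (simp add: E_def rr rr2 g4_def g5_def f7v rr2[simplified] f7v[simplified])
  qed
  then have "AE z in P7. \<not> E z" by (rule AE_SS_to[OF inj pE])
  then have "emeasure P7 {z \<in> space P7. E z} = 0"
    by (subst (asm) AE_iff_measurable[OF _ refl]) (use pE' in \<open>auto simp: pred_def\<close>)
  then have "(\<integral>\<^sup>+ x. ennreal (g4 x * g5 x * (1 - g6 x) * g7 x) \<partial>P3) = 0"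
  proof -
    have r': "g4 x \<in> {0..1} \<and> g5 x \<in> {0..1} \<and> g6 x \<in> {0..1} \<and> g7 x \<in> {0..1}" if "x \<in> space P3" for x
      using r[OF that] by (simp add: g4_def g5_def)
    from prob_event[OF mg(1,2) m(1,2) r'] \<open>emeasure P7 {z \<in> space P7. E z} = 0\<close>
    show ?thesis unfolding E_def by simp
  qed
  then have "AE x in P3. ennreal (g4 x * g5 x * (1 - g6 x) * g7 x) = 0"
  proof -
    have "(\<lambda>x. ennreal (g4 x * g5 x * (1 - g6 x) * g7 x)) \<in> borel_measurable P3" by measurable
    with \<open>(\<integral>\<^sup>+ x. ennreal (g4 x * g5 x * (1 - g6 x) * g7 x) \<partial>P3) = 0\<close> show ?thesis
      by (subst (asm) nn_integral_0_iff_AE) auto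
  qed
  then show ?thesis
  proof (rule AE_mp, intro AE_I2 impI)
    fix x assume x: "x \<in> space P3" and e: "ennreal (g4 x * g5 x * (1 - g6 x) * g7 x) = 0"
    have "0 \<le> g4 x * g5 x * (1 - g6 x) * g7 x" using r[OF x] by (auto simp: g4_def g5_def)
    then show "W (x 1) (x 2) * W (x 2) (x 3) * (1 - g6 x) * g7 x = 0"
      using e by (simp add: g4_def g5_def)
  qed
qed



lemma strict_po_on_mono: "strict_po_on S R \<Longrightarrow> T \<subseteq> S \<Longrightarrow> strict_po_on T R"
  unfolding strict_po_on_def by blast

theorem lemma6p7:
  fixes W :: "real \<Rightarrow> real \<Rightarrow> real"
  assumes meas: "(\<lambda>(x,y). W x y) \<in> borel_measurable (unitI \<Otimes>\<^sub>M unitI)"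
    and range: "\<forall>x\<in>{0..1}. \<forall>y\<in>{0..1}. 0 \<le> W x y \<and> W x y \<le> 1"
  shows "((\<forall>n::nat. AE \<omega> in sample_space. rand_is_poset W {1..n} \<omega>)
          \<longleftrightarrow> (AE \<omega> in sample_space. rand_is_poset W {1..} \<omega>))
       \<and> ((AE \<omega> in sample_space. rand_is_poset W {1..} \<omega>)
          \<longleftrightarrow> (\<exists>prec W'. ordered_unitI prec \<and> is_kernel prec W' \<and>
                 (AE p in unitI \<Otimes>\<^sub>M unitI. W (fst p) (snd p) = W' (fst p) (snd p))))
       \<and> ((\<exists>prec W'. ordered_unitI prec \<and> is_kernel prec W' \<and>
                 (AE p in unitI \<Otimes>\<^sub>M unitI. W (fst p) (snd p) = W' (fst p) (snd p)))
          \<longleftrightarrow> (hom_density 3 D1 W = hom_density 3 D2 W \<and> hom_density 3 D3 W = 0))"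
proof -
  note meas[measurable]
  let ?A = "\<forall>n::nat. AE \<omega> in sample_space. rand_is_poset W {1..n} \<omega>"
  let ?B = "AE \<omega> in sample_space. rand_is_poset W {1..} \<omega>"
  let ?C = "\<exists>prec W'. ordered_unitI prec \<and> is_kernel prec W' \<and>
                 (AE p in unitI \<Otimes>\<^sub>M unitI. W (fst p) (snd p) = W' (fst p) (snd p))"
  let ?D = "hom_density 3 D1 W = hom_density 3 D2 W \<and> hom_density 3 D3 W = 0"
  have BA: "?B \<Longrightarrow> ?A"
  proof
    fix n :: nat assume B: ?B
    show "AE \<omega> in sample_space. rand_is_poset W {1..n} \<omega>"
      using B by eventually_elim (auto simp: rand_is_poset_def intro: strict_po_on_mono)
  qed
  have AB: "?A \<Longrightarrow> ?B"
  proof -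
    assume A: ?A
    then have "AE \<omega> in sample_space. \<forall>n. rand_is_poset W {1..n} \<omega>" by (simp add: AE_all_countable)
    then show ?B
    proof eventually_elim
      case (elim \<omega>)
      show ?case unfolding rand_is_poset_def strict_po_on_def
      proof (intro conjI ballI impI)
        fix x :: nat assume "x \<in> {1..}"
        then show "\<not> rand_edge W \<omega> x x" by (simp add: rand_edge_def)
      next
        fix x y z :: nat assume xyz: "x \<in> {1..}" "y \<in> {1..}" "z \<in> {1..}"
          and e: "rand_edge W \<omega> x y \<and> rand_edge W \<omega> y z"
        define n where "n = max x (max y z)"
        have "strict_po_on {1..n} (rand_edge W \<omega>)" using elim by (simp add: rand_is_poset_def)
        moreover have "x \<in> {1..n}" "y \<in> {1..n}" "z \<in> {1..n}" using xyz by (auto simp: n_def)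
        ultimately show "rand_edge W \<omega> x z" using e unfolding strict_po_on_def by blast
      qed
    qed
  qed
  have rP3: "W (x i) (x j) \<in> {0..1}" if "x \<in> space P3" "i \<in> {1..3}" "j \<in> {1..3}" for x i j
    using range space_P3_mem[OF that(1,2)] space_P3_mem[OF that(1,3)] by auto
  have BD: "?B \<Longrightarrow> ?D"
  proof -
    assume B: ?B
    have po: "rand_edge W \<omega> x z" if "rand_is_poset W {1..} \<omega>" "rand_edge W \<omega> x y" "rand_edge W \<omega> y z"
      "x \<ge> 1" "y \<ge> 1" "z \<ge> 1" for \<omega> x y z
    proof -
      have T: "strict_po_on {1..} (rand_edge W \<omega>)" using that(1) by (simp only: rand_is_poset_def)
      have "x \<in> {1..}" "y \<in> {1..}" "z \<in> {1..}" using that(4-6) by simp_all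
      with T show ?thesis unfolding strict_po_on_def using that(2,3) by blast
    qed
    have irr: "\<not> rand_edge W \<omega> x x" for \<omega> x by (simp add: rand_edge_def)
    have H1: "AE x in P3. W (x 1) (x 2) * W (x 2) (x 3) * (1 - W (x 1) (x 3)) * 1 = 0"
    proof (rule ii_iv_gen[where ?g6.0="\<lambda>x. W (x 1) (x 3)" and ?g7.0="\<lambda>_. 1", OF meas])
      show "(\<lambda>x. W (x 1) (x 3)) \<in> borel_measurable P3" by measurable
      show "(\<lambda>_. 1::real) \<in> borel_measurable P3" by simp
      show "W (x 1) (x 2) \<in> {0..1} \<and> W (x 2) (x 3) \<in> {0..1} \<and> W (x 1) (x 3) \<in> {0..1} \<and> (1::real) \<in> {0..1}"
        if "x \<in> space P3" for x using rP3[OF that] by auto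
      show "AE \<omega> in SS. \<not> (\<omega> (Inr (1,2)) < W (\<omega> (Inl 1)) (\<omega> (Inl 2)) \<and> \<omega> (Inr (2,3)) < W (\<omega> (Inl 2)) (\<omega> (Inl 3))
       \<and> \<not> \<omega> (Inr (1,3)) < (\<lambda>x. W (x 1) (x 3)) (\<lambda>n\<in>{1..3}. \<omega> (Inl n)) \<and> \<omega> (Inr (3,1)) < (\<lambda>_. 1) (\<lambda>n\<in>{1..3}. \<omega> (Inl n)))"
        using B
      proof eventually_elim
        case (elim \<omega>)
        show ?case
        proof
          assume h: "\<omega> (Inr (1,2)) < W (\<omega> (Inl 1)) (\<omega> (Inl 2)) \<and> \<omega> (Inr (2,3)) < W (\<omega> (Inl 2)) (\<omega> (Inl 3))
             \<and> \<not> \<omega> (Inr (1,3)) < (\<lambda>x. W (x 1) (x 3)) (\<lambda>n\<in>{1..3}. \<omega> (Inl n)) \<and> \<omega> (Inr (3,1)) < (\<lambda>_. 1) (\<lambda>n\<in>{1..3}. \<omega> (Inl n))"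
          then have "rand_edge W \<omega> 1 2" "rand_edge W \<omega> 2 3" by (auto simp: rand_edge_def)
          then have "rand_edge W \<omega> 1 3" using po[OF elim] by auto
          then show False using h by (auto simp: rand_edge_def)
        qed
      qed
    qed
    have H2: "AE x in P3. W (x 1) (x 2) * W (x 2) (x 3) * (1 - 0) * W (x 3) (x 1) = 0"
    proof (rule ii_iv_gen[where ?g6.0="\<lambda>_. 0" and ?g7.0="\<lambda>x. W (x 3) (x 1)", OF meas])
      show "(\<lambda>x. W (x 3) (x 1)) \<in> borel_measurable P3" by measurable
      show "(\<lambda>_. 0::real) \<in> borel_measurable P3" by simp
      show "W (x 1) (x 2) \<in> {0..1} \<and> W (x 2) (x 3) \<in> {0..1} \<and> (0::real) \<in> {0..1} \<and> W (x 3) (x 1) \<in> {0..1}"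
        if "x \<in> space P3" for x using rP3[OF that] by auto
      show "AE \<omega> in SS. \<not> (\<omega> (Inr (1,2)) < W (\<omega> (Inl 1)) (\<omega> (Inl 2)) \<and> \<omega> (Inr (2,3)) < W (\<omega> (Inl 2)) (\<omega> (Inl 3))
       \<and> \<not> \<omega> (Inr (1,3)) < (\<lambda>_. 0) (\<lambda>n\<in>{1..3}. \<omega> (Inl n)) \<and> \<omega> (Inr (3,1)) < (\<lambda>x. W (x 3) (x 1)) (\<lambda>n\<in>{1..3}. \<omega> (Inl n)))"
        using B
      proof eventually_elim
        case (elim \<omega>)
        show ?case
        proof
          assume h: "\<omega> (Inr (1,2)) < W (\<omega> (Inl 1)) (\<omega> (Inl 2)) \<and> \<omega> (Inr (2,3)) < W (\<omega> (Inl 2)) (\<omega> (Inl 3))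
             \<and> \<not> \<omega> (Inr (1,3)) < (\<lambda>_. 0) (\<lambda>n\<in>{1..3}. \<omega> (Inl n)) \<and> \<omega> (Inr (3,1)) < (\<lambda>x. W (x 3) (x 1)) (\<lambda>n\<in>{1..3}. \<omega> (Inl n))"
          then have e12: "rand_edge W \<omega> 1 2" and e23: "rand_edge W \<omega> 2 3" and e31: "rand_edge W \<omega> 3 1"
            by (auto simp: rand_edge_def)
          have e13: "rand_edge W \<omega> 1 3" using po[OF elim e12 e23] by simp
          have "rand_edge W \<omega> 1 1" using po[OF elim e13 e31] by simp
          then show False using irr by simp
        qed
      qed
    qed
    show ?D unfolding iv_iff[OF meas range] using H1 H2 by simp
  qed
  have DC: "?D \<Longrightarrow> ?C"
  proof -
    assume D: ?D
    then have H: "AE x in P3. W (x 1) (x 2) * W (x 2) (x 3) * (1 - W (x 1) (x 3)) = 0"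
      "AE x in P3. W (x 1) (x 2) * W (x 2) (x 3) * W (x 3) (x 1) = 0"
      unfolding iv_iff[OF meas range] by auto
    show ?C by (rule kernel_construct[OF meas range from_iv[OF H meas]])
  qed
  have CB: "?C \<Longrightarrow> ?B" using iii_ii by blast
  show ?thesis using AB BA BD DC CB by blast
qed



end
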